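(* Assume the law of excluded middle. Then for all $\alpha,\beta\in\mathrm{ord}$ we have $\alpha\le\beta$ or $\beta<\alpha$. Moreover, if $\beta<\alpha$, then there exists $i\in I_\alpha$ such that $\beta\le\alpha_i$.
   Context: Let $\mathfrak F$ be a set of index sets such that: $\mathbb N$ and each $\mathbb N_k=\{n\in\mathbb N:n<k\}$ ($k\ge 0$) belong to $\mathfrak F$; every finitely enumerated subset of an element of $\mathfrak F$ is isomorphic to an element of $\mathfrak F$; for $J\in\mathfrak F$ the set of finitely enumerated subsets of $J$ is isomorphic to an element of $\mathfrak F$; $\mathfrak F$ is stable under disjoint unions indexed by elements of $\mathfrak F$. A finitely enumerated subset of $A$ is one given by a map $\mathbb N_k\to A$; write $F\subseteq_f I$. The set $\mathrm{ord}$ is inductively generated by $\underline 0$ and, for every family $(\alpha_i)_{i\in I}$ with $I\in\mathfrak F$, $\alpha_i\in\mathrm{ord}$, an element $\mathrm S(\alpha_i)_{i\in I}$; for such $\alpha$, $I_\alpha=I$ and $\alpha_i$ are its definitional subordinals; $I_{\underline 0}=\emptyset$. For a finite list $F$ in $I_\alpha$, $\alpha_F$ is the list of the $\alpha_i$, $i\in F$. Relations between an element and a nonempty finite list, by simultaneous induction: $\alpha\le\beta^1,\dots,\beta^m$ means $\alpha_i<\beta^1,\dots,\beta^m$ for all $i\in I_\alpha$; $\alpha<\beta^1,\dots,\beta^m$ means there exist $F_1\subseteq_f I_{\beta^1},\dots,F_m\subseteq_f I_{\beta^m}$, not all empty, with $\alpha\le\beta^1_{F_1},\dots,\beta^m_{F_m}$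 (concatenated list). $\alpha\le\beta$ and $\alpha<\beta$ are the case $m=1$. *)

theory Defs
  imports Main "HOL-Library.Equipollence"
begin

text \<open>Index sets are subsets of a fixed ambient type 'i.
  A node carries its index set I and a family f; only f on I matters, and we
  normalise f to Zero outside I in the well-formedness predicate.\<close>

datatype 'i ord = Zero | Sup "'i set" "'i \<Rightarrow> 'i ord"

fun idx :: "'i ord \<Rightarrow> 'i set" where
  "idx Zero = {}"
| "idx (Sup I f) = I"

fun sub :: "'i ord \<Rightarrow> 'i \<Rightarrow> 'i ord" where
  "sub Zero i = Zero"
| "sub (Sup I f) i = f i"

inductive_set ordF :: "'i set set \<Rightarrow> 'i ord set" for FF :: "'i set set" where
  zero: "Zero \<in> ordF FF"
| sup: "\<lbrakk>I \<in> FF; \<forall>i\<in>I. f i \<in> ordF FF; \<forall>i. i \<notin> I \<longrightarrow> f i = Zero\<rbrakk>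
        \<Longrightarrow> Sup I f \<in> ordF FF"

text \<open>Assumptions on the family of index sets (up to isomorphism = bijection).
  A finitely enumerated subset of A is a list of elements of A.\<close>
definition index_family :: "'i set set \<Rightarrow> bool" where
  "index_family FF \<longleftrightarrow>
     (\<exists>I\<in>FF. I \<approx> (UNIV :: nat set))
   \<and> (\<forall>k::nat. \<exists>I\<in>FF. I \<approx> {n. n < k})
   \<and> (\<forall>J\<in>FF. \<forall>F. set F \<subseteq> J \<longrightarrow> (\<exists>I\<in>FF. set F \<approx> I))
   \<and> (\<forall>J\<in>FF. \<exists>I\<in>FF. {F. set F \<subseteq> J} \<approx> I)
   \<and> (\<forall>J\<in>FF. \<forall>K. (\<forall>j\<in>J. K j \<in> FF) \<longrightarrow> (\<exists>I\<in>FF. Sigma J K \<approx> I))"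

definition subl :: "'i ord \<Rightarrow> 'i list \<Rightarrow> 'i ord list" where
  "subl a F = map (sub a) F"

inductive ord_le :: "'i ord \<Rightarrow> 'i ord list \<Rightarrow> bool"
  and ord_lt :: "'i ord \<Rightarrow> 'i ord list \<Rightarrow> bool" where
  le_intro: "\<lbrakk>bs \<noteq> []; \<forall>i\<in>idx a. ord_lt (sub a i) bs\<rbrakk> \<Longrightarrow> ord_le a bs"
| lt_intro: "\<lbrakk>bs \<noteq> []; length Fs = length bs;
              \<forall>j<length bs. set (Fs ! j) \<subseteq> idx (bs ! j);
              concat Fs \<noteq> [];
              ord_le a (concat (map2 subl bs Fs))\<rbrakk> \<Longrightarrow> ord_lt a bs"

end

theory Submission
  imports Defs
begin

inductive LE :: "'i ord \<Rightarrow> 'i ord \<Rightarrow> bool" where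
  "(\<forall>i\<in>idx a. \<exists>k\<in>idx b. LE (sub a i) (sub b k)) \<Longrightarrow> LE a b"

lemma LE_iff: "LE a b \<longleftrightarrow> (\<forall>i\<in>idx a. \<exists>k\<in>idx b. LE (sub a i) (sub b k))"
  by (subst LE.simps) auto

lemma LE_Zero[simp]: "LE Zero b"
  by (subst LE_iff) simp

lemma LE_Sup: "LE (Sup I f) b \<longleftrightarrow> (\<forall>i\<in>I. \<exists>k\<in>idx b. LE (f i) (sub b k))"
  by (subst LE_iff) simp

lemma LE_trans: "LE a b \<Longrightarrow> LE b c \<Longrightarrow> LE a c"
proof (induction a arbitrary: b c)
  case Zero
  then show ?case by simp
next
  case (Sup I f)
  show ?case unfolding LE_iff[of "Sup I f" c]
  proof
    fix i assume i: "i \<in> idx (Sup I f)"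
    from Sup.prems(1) i obtain k where k: "k \<in> idx b" "LE (f i) (sub b k)"
      by (auto simp: LE_Sup)
    from Sup.prems(2) k obtain l where l: "l \<in> idx c" "LE (sub b k) (sub c l)"
      using LE_iff[of b c] by blast
    have "LE (f i) (sub c l)" using Sup.IH[OF rangeI k(2) l(2)] .
    then show "\<exists>k\<in>idx c. LE (sub (Sup I f) i) (sub c k)" using l by auto
  qed
qed

lemma LE_total: "LE a b \<or> (\<exists>i\<in>idx a. LE b (sub a i))"
proof (induction a arbitrary: b)
  case Zero
  then show ?case by simp
next
  case (Sup I f)
  show ?case
  proof (cases "LE (Sup I f) b")
    case False
    then obtain i where i: "i \<in> I" and nk: "\<forall>k\<in>idx b. \<not> LE (f i) (sub b k)"
      by (auto simp: LE_Sup)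
    have "LE b (f i)" unfolding LE_iff[of b]
    proof
      fix k assume k: "k \<in> idx b"
      have "LE (f i) (sub b k) \<or> (\<exists>l\<in>idx (f i). LE (sub b k) (sub (f i) l))"
        by (rule Sup.IH[OF rangeI])
      with nk k
      show "\<exists>l\<in>idx (f i). LE (sub b k) (sub (f i) l)" by auto
    qed
    then show ?thesis using i by auto
  qed simp
qed

lemma LE_refl: "LE a a"
  by (induction a) (auto simp: LE_Sup)

lemma LE_sub: "i \<in> idx y \<Longrightarrow> LE (sub y i) y"
proof (induction y arbitrary: i)
  case Zero
  then show ?case by simp
next
  case (Sup I f)
  show ?case unfolding LE_iff[of _ "Sup I f"]
  proof
    fix j assume "j \<in> idx (sub (Sup I f) i)"
    then have "j \<in> idx (f i)" by simp
    then have "LE (sub (f i) j) (f i)" by (rule Sup.IH[OF rangeI])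
    then show "\<exists>k\<in>idx (Sup I f). LE (sub (sub (Sup I f) i) j) (sub (Sup I f) k)"
      using Sup.prems by auto
  qed
qed

lemma LE_max: "cs \<noteq> [] \<Longrightarrow> \<exists>c\<in>set cs. \<forall>d\<in>set cs. LE d c"
proof (induction cs)
  case Nil
  then show ?case by simp
next
  case (Cons x xs)
  show ?case
  proof (cases "xs = []")
    case True
    then show ?thesis using LE_refl[of x] by simp
  next
    case False
    then obtain c where c: "c \<in> set xs" "\<forall>d\<in>set xs. LE d c" using Cons.IH by blast
    show ?thesis
    proof (cases "LE c x")
      case True
      have "\<forall>d\<in>set (x#xs). LE d x"
      proof
        fix d assume "d \<in> set (x#xs)"
        then consider "d = x" | "d \<in> set xs" by auto
        then show "LE d x"
        proof cases
          case 1 then show ?thesis using LE_refl[of x] by simp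
        next
          case 2 then have "LE d c" using c(2) by blast
          then show ?thesis using LE_trans True by blast
        qed
      qed
      then show ?thesis by simp
    next
      case False
      then obtain i where i: "i \<in> idx c" "LE x (sub c i)" using LE_total[of c x] by blast
      have "LE (sub c i) c" using LE_sub[OF i(1)] .
      then have "LE x c" using LE_trans[OF i(2)] by blast
      then have "\<forall>d\<in>set (x#xs). LE d c" using c(2) by simp
      then show ?thesis using c(1) by (meson list.set_intros(2))
    qed
  qed
qed

lemma set_concat_map2:
  "length Fs = length cs \<Longrightarrow>
   set (concat (map2 subl cs Fs)) = (\<Union>j<length cs. sub (cs!j) ` set (Fs!j))"
  by (auto simp: set_zip subl_def)

lemma lt_from_le:
  assumes A: "\<And>ds. ord_le x ds \<longleftrightarrow> ds \<noteq> [] \<and> (\<exists>d\<in>set ds. LE x d)"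
  shows "ord_lt x cs \<longleftrightarrow> cs \<noteq> [] \<and> (\<exists>c\<in>set cs. \<exists>k\<in>idx c. LE x (sub c k))"
proof
  assume "ord_lt x cs"
  then obtain Fs where h: "cs \<noteq> []" "length Fs = length cs"
     "\<forall>j<length cs. set (Fs ! j) \<subseteq> idx (cs ! j)"
     "ord_le x (concat (map2 subl cs Fs))"
    by (subst (asm) ord_lt.simps) auto
  then obtain d where d: "d \<in> set (concat (map2 subl cs Fs))" "LE x d" using A by blast
  have "d \<in> (\<Union>j<length cs. sub (cs!j) ` set (Fs!j))"
    using d(1) unfolding set_concat_map2[OF h(2)] .
  then obtain j k where "j < length cs" "k \<in> set (Fs!j)" "LE x (sub (cs!j) k)"
    using d(2) by blast
  then show "cs \<noteq> [] \<and> (\<exists>c\<in>set cs. \<exists>k\<in>idx c. LE x (sub c k))"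
    using h(1,3) by (metis nth_mem subsetD)
next
  assume "cs \<noteq> [] \<and> (\<exists>c\<in>set cs. \<exists>k\<in>idx c. LE x (sub c k))"
  then obtain j k where j: "cs \<noteq> []" "j < length cs" "k \<in> idx (cs!j)" "LE x (sub (cs!j) k)"
    by (metis in_set_conv_nth)
  define Fs where "Fs = (replicate (length cs) [])[j := [k]]"
  have len: "length Fs = length cs" by (simp add: Fs_def)
  have Fsj: "\<And>l. l < length cs \<Longrightarrow> Fs!l = (if l = j then [k] else [])"
    using j(2) by (simp add: Fs_def nth_list_update)
  have sub: "\<forall>l<length cs. set (Fs ! l) \<subseteq> idx (cs ! l)" using Fsj j by auto
  have setc: "set (concat (map2 subl cs Fs)) = {sub (cs!j) k}"
    unfolding set_concat_map2[OF len] using Fsj j(2) by auto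
  then have ne: "concat (map2 subl cs Fs) \<noteq> []" by (metis empty_not_insert list.set(1))
  have "sub (cs!j) k \<in> set (concat (map2 subl cs Fs))" unfolding setc by simp
  then have ole: "ord_le x (concat (map2 subl cs Fs))" using A ne j(4) by blast
  have "Fs ! j \<in> set Fs" using j(2) len by simp
  then have "k \<in> set (concat Fs)" using Fsj[OF j(2)] by force
  then have ne2: "concat Fs \<noteq> []" by (metis empty_iff list.set(1))
  then show "ord_lt x cs" using lt_intro[OF j(1) len sub ne2 ole] by blast
qed

lemma le_char: "ord_le x ds \<longleftrightarrow> ds \<noteq> [] \<and> (\<exists>d\<in>set ds. LE x d)"
proof (induction x arbitrary: ds)
  case Zero
  then show ?case
    by (subst ord_le.simps) (auto simp: neq_Nil_conv)
next
  case (Sup I f)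
  have lt: "\<And>i cs. ord_lt (f i) cs \<longleftrightarrow> cs \<noteq> [] \<and> (\<exists>c\<in>set cs. \<exists>k\<in>idx c. LE (f i) (sub c k))"
    by (rule lt_from_le) (rule Sup.IH[OF rangeI])
  have "ord_le (Sup I f) ds \<longleftrightarrow> ds \<noteq> [] \<and> (\<forall>i\<in>I. \<exists>c\<in>set ds. \<exists>k\<in>idx c. LE (f i) (sub c k))"
    by (subst ord_le.simps) (auto simp: lt)
  also have "\<dots> \<longleftrightarrow> ds \<noteq> [] \<and> (\<exists>d\<in>set ds. LE (Sup I f) d)"
  proof
    assume h: "ds \<noteq> [] \<and> (\<forall>i\<in>I. \<exists>c\<in>set ds. \<exists>k\<in>idx c. LE (f i) (sub c k))"
    then obtain m where m: "m \<in> set ds" "\<forall>d\<in>set ds. LE d m" using LE_max by blast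
    have "LE (Sup I f) m" unfolding LE_iff[of "Sup I f"]
    proof
      fix i assume "i \<in> idx (Sup I f)"
      then obtain c k where ck: "c \<in> set ds" "k \<in> idx c" "LE (f i) (sub c k)" using h by auto
      have "LE c m" using m ck by auto
      then obtain l where "l \<in> idx m" "LE (sub c k) (sub m l)" using ck(2) LE_iff[of c m] by blast
      then show "\<exists>l\<in>idx m. LE (sub (Sup I f) i) (sub m l)" using ck(3) LE_trans by auto
    qed
    then show "ds \<noteq> [] \<and> (\<exists>d\<in>set ds. LE (Sup I f) d)" using h m by auto
  next
    assume h: "ds \<noteq> [] \<and> (\<exists>d\<in>set ds. LE (Sup I f) d)"
    then obtain d where d: "d \<in> set ds" "LE (Sup I f) d" by blast
    have "\<forall>i\<in>I. \<exists>k\<in>idx d. LE (f i) (sub d k)" using d(2) unfolding LE_Sup .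
    then show "ds \<noteq> [] \<and> (\<forall>i\<in>I. \<exists>c\<in>set ds. \<exists>k\<in>idx c. LE (f i) (sub c k))"
      using h d(1) by blast
  qed
  finally show ?case .
qed

lemma lt_char: "ord_lt x cs \<longleftrightarrow> cs \<noteq> [] \<and> (\<exists>c\<in>set cs. \<exists>k\<in>idx c. LE x (sub c k))"
  by (rule lt_from_le) (rule le_char)

theorem proposition3p19:
  fixes FF :: "'i set set"
  assumes "index_family FF"
  shows "\<forall>a\<in>ordF FF. \<forall>b\<in>ordF FF.
           (ord_le a [b] \<or> ord_lt b [a])
         \<and> (ord_lt b [a] \<longrightarrow> (\<exists>i\<in>idx a. ord_le b [sub a i]))"
  using LE_total by (auto simp: le_char lt_char)

end
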